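(* Let $(X,\varrho)$ and $(Y,d)$ be metric spaces and $f\colon X\to Y$. In addition to all implications valid for topological $X$ (PCP $\Rightarrow$ fragmentable; fragmentable $\Rightarrow$ cliquish; fragmentable $\Rightarrow$ weakly separated; Lebesgue property $\Rightarrow$ generalized Lebesgue property; generalized Lebesgue property $\Rightarrow$ weakly separated and $\Rightarrow$ Borel 1; pointwise discontinuous $\Rightarrow$ cliquish; for $X$ Baire: generalized Lebesgue property $\Rightarrow$ cliquish and cliquish $\Rightarrow$ pointwise discontinuous; for $X$ hereditarily Baire: fragmentable $\Rightarrow$ PCP and generalized Lebesgue property $\Rightarrow$ fragmentable; for $Y$ separable: Borel 1 $\Rightarrow$ Lebesgue property), the following hold: (a) $f$ is weakly separated if and only if $f$ has the LTZ property; (b) if $f$ is weakly separated, then $f$ has the generalized Lebesgue property; (c) if $f$ is fragmentable, then $f$ is Borel 1; (d) if $X$ is hereditarily Baire and $f$ is Borel 1, then $f$ has (PCP); (e) if $X$ is hereditarily Baire and $f$ is weakly separated, then $f$ is fragmentable; (f) if $X$ is separable and $f$ has the generalized Lebesgue property, then $f$ has the Lebesgue property.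
   Context: Let $X$ be a topological space, $(Y,d)$ a metric space and $f\colon X\to Y$. A neighborhood assignment is a family $\{V_x\}_{x\in X}$ of open subsets of $X$ with $x\in V_x$ for every $x$. A family of subsets of $X$ is discrete if every point of $X$ has a neighborhood meeting at most one member of the family; it is $\sigma$-discrete if it is a countable union of discrete families. The function $f$ is called: weakly separated if for every $\varepsilon>0$ there is a neighborhood assignment $\{V_x\}_{x\in X}$ such that for all $x,y\in X$, $(x,y)\in V_y\times V_x$ implies $d(f(x),f(y))<\varepsilon$; fragmentable if for every $\varepsilon>0$ and every nonempty closed $F\subseteq X$ there is an open $U$ with $U\cap F\neq\emptyset$ and $\operatorname{diam} f(U\cap F)<\varepsilon$; cliquish if for every $\varepsilon>0$ and every nonempty open $U\subseteq X$ there is a nonempty open $O\subseteq U$ with $\operatorname{diam} f(O)<\varepsilon$; said to have the Lebesgue property if for every $\varepsilon>0$ there are closed sets $X_n$ ($n\in\mathbb N$) with $X=\bigcup_n X_n$ and $\operatorname{diam} f(X_n)\le\varepsilon$ for all $n$; said to have the generalized Lebesgue property if for every $\varepsilon>0$ there is a $\sigma$-discrete family $\mathcal A_\varepsilon$ of closed subsets of $X$ with $X=\bigcup\mathcal A_\varepsilon$ and $\operatorname{diam} f(A)\le\varepsilon$ for all $A\in\mathcal A_\varepsilon$; said to have (PCP) if for every nonempty closed $F\subseteq X$ the restriction $f|_F$ has a point of continuity; pointwise discontinuous if the set of continuity points of $f$ is dense in $X$; Borel 1 if $f^{-1}(V)$ is an $F_\sigma$ set in $X$ for every open $V\subseteq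 Y$. A space is Baire if every nonempty open subset of it is nonmeager in it; it is hereditarily Baire if every nonempty closed subspace is a Baire space. When $X$ carries a metric $\varrho$, $f$ has the LTZ property if for every $\varepsilon>0$ there is $\delta_\varepsilon\colon X\to(0,\infty)$ such that for all $x,y\in X$, $\varrho(x,y)<\min\{\delta_\varepsilon(x),\delta_\varepsilon(y)\}$ implies $d(f(x),f(y))<\varepsilon$. *)

theory Defs
  imports "HOL-Analysis.Analysis"
begin

text \<open>Diameter of a set in a metric space, valued in the extended reals
  (so that unbounded sets have diameter \<open>\<infinity>\<close>; the empty set has diameter \<open>-\<infinity>\<close>).\<close>
definition diam :: "'b::metric_space set \<Rightarrow> ereal" where
  "diam S = (SUP p\<in>S \<times> S. ereal (dist (fst p) (snd p)))"

definition weakly_separated :: "('a::topological_space \<Rightarrow> 'b::metric_space) \<Rightarrow> bool" where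
  "weakly_separated f \<longleftrightarrow> (\<forall>\<epsilon>>0. \<exists>V::'a \<Rightarrow> 'a set.
      (\<forall>x. open (V x) \<and> x \<in> V x) \<and>
      (\<forall>x y. (x \<in> V y \<and> y \<in> V x) \<longrightarrow> dist (f x) (f y) < \<epsilon>))"

definition fragmentable :: "('a::topological_space \<Rightarrow> 'b::metric_space) \<Rightarrow> bool" where
  "fragmentable f \<longleftrightarrow> (\<forall>\<epsilon>>0. \<forall>F. closed F \<and> F \<noteq> {} \<longrightarrow>
      (\<exists>U. open U \<and> U \<inter> F \<noteq> {} \<and> diam (f ` (U \<inter> F)) < ereal \<epsilon>))"

definition cliquish :: "('a::topological_space \<Rightarrow> 'b::metric_space) \<Rightarrow> bool" where
  "cliquish f \<longleftrightarrow> (\<forall>\<epsilon>>0. \<forall>U. open U \<and> U \<noteq> {} \<longrightarrow>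
      (\<exists>W. open W \<and> W \<noteq> {} \<and> W \<subseteq> U \<and> diam (f ` W) < ereal \<epsilon>))"

definition Lebesgue_property :: "('a::topological_space \<Rightarrow> 'b::metric_space) \<Rightarrow> bool" where
  "Lebesgue_property f \<longleftrightarrow> (\<forall>\<epsilon>>0. \<exists>C::nat \<Rightarrow> 'a set.
      (\<forall>n. closed (C n)) \<and> (\<Union>n. C n) = UNIV \<and> (\<forall>n. diam (f ` C n) \<le> ereal \<epsilon>))"

definition discrete_family :: "'a::topological_space set set \<Rightarrow> bool" where
  "discrete_family \<A> \<longleftrightarrow> (\<forall>x. \<exists>W. open W \<and> x \<in> W \<and>
      (\<forall>A\<in>\<A>. \<forall>B\<in>\<A>. A \<inter> W \<noteq> {} \<and> B \<inter> W \<noteq> {} \<longrightarrow> A = B))"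

definition sigma_discrete_family :: "'a::topological_space set set \<Rightarrow> bool" where
  "sigma_discrete_family \<A> \<longleftrightarrow> (\<exists>\<D>::nat \<Rightarrow> 'a set set.
      (\<forall>n. discrete_family (\<D> n)) \<and> \<A> = (\<Union>n. \<D> n))"

definition generalized_Lebesgue_property :: "('a::topological_space \<Rightarrow> 'b::metric_space) \<Rightarrow> bool" where
  "generalized_Lebesgue_property f \<longleftrightarrow> (\<forall>\<epsilon>>0. \<exists>\<A>::'a set set.
      sigma_discrete_family \<A> \<and> (\<forall>A\<in>\<A>. closed A) \<and> \<Union>\<A> = UNIV \<and>
      (\<forall>A\<in>\<A>. diam (f ` A) \<le> ereal \<epsilon>))"

definition PCP :: "('a::topological_space \<Rightarrow> 'b::metric_space) \<Rightarrow> bool" where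
  "PCP f \<longleftrightarrow> (\<forall>F. closed F \<and> F \<noteq> {} \<longrightarrow> (\<exists>x\<in>F. (f \<longlongrightarrow> f x) (at x within F)))"

definition pointwise_discontinuous :: "('a::topological_space \<Rightarrow> 'b::metric_space) \<Rightarrow> bool" where
  "pointwise_discontinuous f \<longleftrightarrow> closure {x. (f \<longlongrightarrow> f x) (at x)} = UNIV"

definition Borel1 :: "('a::topological_space \<Rightarrow> 'b::metric_space) \<Rightarrow> bool" where
  "Borel1 f \<longleftrightarrow> (\<forall>V. open V \<longrightarrow> fsigma_in euclidean (f -` V))"

definition LTZ :: "('a::metric_space \<Rightarrow> 'b::metric_space) \<Rightarrow> bool" where
  "LTZ f \<longleftrightarrow> (\<forall>\<epsilon>>0. \<exists>\<delta>::'a \<Rightarrow> real. (\<forall>x. \<delta> x > 0) \<and>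
      (\<forall>x y. dist x y < min (\<delta> x) (\<delta> y) \<longrightarrow> dist (f x) (f y) < \<epsilon>))"

definition nowhere_dense_in :: "'a topology \<Rightarrow> 'a set \<Rightarrow> bool" where
  "nowhere_dense_in T S \<longleftrightarrow> S \<subseteq> topspace T \<and> T interior_of (T closure_of S) = {}"

definition meager_in :: "'a topology \<Rightarrow> 'a set \<Rightarrow> bool" where
  "meager_in T S \<longleftrightarrow> (\<exists>N::nat \<Rightarrow> 'a set. (\<forall>n. nowhere_dense_in T (N n)) \<and> S = (\<Union>n. N n))"

definition Baire_space :: "'a topology \<Rightarrow> bool" where
  "Baire_space T \<longleftrightarrow> (\<forall>U. openin T U \<and> U \<noteq> {} \<longrightarrow> \<not> meager_in T U)"

definition hereditarily_Baire :: "'a topology \<Rightarrow> bool" where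
  "hereditarily_Baire T \<longleftrightarrow> (\<forall>F. closedin T F \<and> F \<noteq> {} \<longrightarrow> Baire_space (subtopology T F))"

end

theory Submission
  imports Defs
begin


lemma baire_piece:
  fixes F V :: "'a::metric_space set"
  assumes hB: "hereditarily_Baire (euclidean::'a topology)" and F: "closed F"
    and V: "open V" "V \<inter> F \<noteq> {}"
    and cnt: "countable \<C>" and cl: "\<forall>C\<in>\<C>. closed C" and cov: "V \<inter> F \<subseteq> \<Union>\<C>"
  shows "\<exists>C\<in>\<C>. \<exists>U. open U \<and> U \<inter> F \<noteq> {} \<and> U \<inter> F \<subseteq> C \<inter> V"
proof (rule ccontr)
  assume H: "\<not> ?thesis"
  have "F \<noteq> {}" using V by auto
  then have B: "Baire_space (subtopology euclidean F)"
    using hB F unfolding hereditarily_Baire_def closed_closedin by blast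
  have op: "openin (subtopology euclidean F) (V \<inter> F)"
    unfolding openin_subtopology using V(1) open_openin by blast
  have "\<C> \<noteq> {}" using cov V(2) by (metis Union_empty subset_empty)
  define g where "g = from_nat_into \<C>"
  have rg: "range g = \<C>" unfolding g_def using cnt \<open>\<C> \<noteq> {}\<close> by (rule range_from_nat_into[rotated])
  define N where "N n = g n \<inter> V \<inter> F" for n
  have "V \<inter> F = (\<Union>n. N n)" using cov rg unfolding N_def by blast
  moreover have "nowhere_dense_in (subtopology euclidean F) (N n)" for n
  proof -
    have gc: "closed (g n)" using cl rg by blast
    have "T = {}" if T: "openin (subtopology euclidean F) T"
      "T \<subseteq> (subtopology euclidean F) closure_of (N n)" for T
    proof (rule ccontr)
      assume "T \<noteq> {}"
      then obtain t where t: "t \<in> T" by blast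
      obtain U0 where U0': "openin euclidean U0" "T = U0 \<inter> F" using T(1) unfolding openin_subtopology by auto
      have U0: "open U0" "T = U0 \<inter> F" using U0' by (simp_all only: open_openin)
      have cs: "(subtopology euclidean F) closure_of (N n) \<subseteq> closure (N n)"
        by (metis closure_of_subtopology_subset euclidean_closure_of)
      have "t \<in> closure (N n)" using t T(2) cs by blast
      then have "U0 \<inter> closure (N n) \<noteq> {}" using U0 t by blast
      then have "U0 \<inter> N n \<noteq> {}" using open_Int_closure_eq_empty[OF U0(1)] by blast
      then obtain p where p: "p \<in> N n" "p \<in> U0" by blast
      have "closure (N n) \<subseteq> g n" using gc unfolding N_def by (meson closure_minimal inf_le1 order.trans)
      then have "(U0 \<inter> V) \<inter> F \<subseteq> g n \<inter> V" using T(2) U0 cs by blast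
      moreover have "(U0 \<inter> V) \<inter> F \<noteq> {}" using p unfolding N_def by blast
      moreover have "open (U0 \<inter> V)" using U0(1) V(1) by blast
      ultimately show False using H rg by blast
    qed
    moreover have "N n \<subseteq> topspace (subtopology euclidean F)" unfolding N_def by simp
    ultimately show ?thesis
      unfolding nowhere_dense_in_def interior_of_eq_empty
      by (meson interior_of_subset openin_interior_of order.trans)
  qed
  ultimately have "meager_in (subtopology euclidean F) (V \<inter> F)"
    unfolding meager_in_def by blast
  then show False using B op V(2) unfolding Baire_space_def by blast
qed


lemma arch_suc: assumes "0 < (x::real)" shows "\<exists>m. 1 / real (Suc m) < x"
  using reals_Archimedean[OF assms] by (simp add: inverse_eq_divide)

lemma diam_le: "(\<And>x y. x \<in> S \<Longrightarrow> y \<in> S \<Longrightarrow> dist x y \<le> e) \<Longrightarrow> diam S \<le> ereal e"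
  unfolding diam_def by (rule SUP_least) auto

lemma diam_ge: "x \<in> S \<Longrightarrow> y \<in> S \<Longrightarrow> ereal (dist x y) \<le> diam S"
  unfolding diam_def by (rule SUP_upper2[of "(x,y)"]) auto

lemma diam_lt: "diam S < ereal e \<Longrightarrow> x \<in> S \<Longrightarrow> y \<in> S \<Longrightarrow> dist x y < e"
  using diam_ge[of x S y] by (meson ereal_less_eq(3) le_less_trans not_le)

lemma diam_le_dist: "diam S \<le> ereal e \<Longrightarrow> x \<in> S \<Longrightarrow> y \<in> S \<Longrightarrow> dist x y \<le> e"
  using diam_ge[of x S y] by (meson ereal_less_eq(3) order_trans)

lemma diam_mono: "S \<subseteq> T \<Longrightarrow> diam S \<le> diam T"
  unfolding diam_def by (rule SUP_subset_mono) auto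

lemma stone_sep:
  fixes r :: real assumes r: "r > 0"
  shows "\<exists>E::nat \<Rightarrow> 'b::metric_space \<Rightarrow> 'b set.
     (\<forall>m a y. y \<in> E m a \<longrightarrow> ball y (1 / real (Suc m)) \<subseteq> ball a r) \<and> (\<forall>y. \<exists>m a. y \<in> E m a) \<and>
     (\<forall>m a b y z. a \<noteq> b \<longrightarrow> y \<in> E m a \<longrightarrow> z \<in> E m b \<longrightarrow> 1 / real (Suc m) \<le> dist y z)"
proof -
  obtain R :: "'b rel" where R0: "Well_order R \<and> Field R = UNIV" using well_ordering by (rule exE)
  have R: "well_order_on UNIV R" using R0 by metis
  define s where "s = R - Id"
  have wf: "wf s" using R unfolding s_def well_order_on_def by blast
  have tot: "(a,b) \<in> s \<or> (b,a) \<in> s" if "a \<noteq> b" for a b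
    using R that unfolding s_def well_order_on_def linear_order_on_def total_on_def by auto
  define E where "E m a = {y. y \<in> ball a r \<and> (\<forall>b. (b,a) \<in> s \<longrightarrow> y \<notin> ball b r) \<and>
      ball y (1 / real (Suc m)) \<subseteq> ball a r}" for m a
  have 1: "\<forall>m a y. y \<in> E m a \<longrightarrow> ball y (1 / real (Suc m)) \<subseteq> ball a r" by (auto simp: E_def)
  have 2: "\<exists>m a. y \<in> E m a" for y
  proof -
    have yin: "y \<in> {a. y \<in> ball a r}" using r by simp
    obtain a where a: "a \<in> {a. y \<in> ball a r}" "\<And>b. (b,a) \<in> s \<Longrightarrow> b \<notin> {a. y \<in> ball a r}"
      using wfE_min[OF wf yin] by blast
    have "dist a y < r" using a(1) by simp
    then obtain m where m: "1 / real (Suc m) < r - dist a y"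
      using arch_suc[of "r - dist a y"] by auto
    have "ball y (1 / real (Suc m)) \<subseteq> ball a r"
    proof
      fix z assume "z \<in> ball y (1 / real (Suc m))"
      then have "dist y z < 1 / real (Suc m)" by simp
      moreover have "dist a z \<le> dist a y + dist y z" by (rule dist_triangle)
      ultimately have "dist a z < r" using m by linarith
      then show "z \<in> ball a r" by simp
    qed
    then have "y \<in> E m a" using a unfolding E_def by auto
    then show ?thesis by blast
  qed
  have 3: "1 / real (Suc m) \<le> dist y z" if "a \<noteq> b" "y \<in> E m a" "z \<in> E m b" for m a b y z
  proof -
    from tot[OF that(1)] show ?thesis
    proof
      assume "(a,b) \<in> s"
      then have "z \<notin> ball a r" using that(3) unfolding E_def by auto
      moreover have "ball y (1 / real (Suc m)) \<subseteq> ball a r" using that(2) unfolding E_def by auto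
      ultimately have "z \<notin> ball y (1 / real (Suc m))" by blast
      then show ?thesis by simp
    next
      assume "(b,a) \<in> s"
      then have "y \<notin> ball b r" using that(2) unfolding E_def by auto
      moreover have "ball z (1 / real (Suc m)) \<subseteq> ball b r" using that(3) unfolding E_def by auto
      ultimately have "y \<notin> ball z (1 / real (Suc m))" by blast
      then show ?thesis by (simp add: dist_commute)
    qed
  qed
  show ?thesis using 1 2 3 by blast
qed

inductive_set tower :: "('a set \<Rightarrow> 'a set) \<Rightarrow> 'a set set" for D where
  tower_step: "F \<in> tower D \<Longrightarrow> D F \<in> tower D"
| tower_Inter: "(\<And>F. F \<in> S \<Longrightarrow> F \<in> tower D) \<Longrightarrow> \<Inter>S \<in> tower D"

lemma tower_lemma1:
  assumes defl: "\<And>F. D F \<subseteq> F" and ext: "\<forall>G\<in>tower D. c \<subset> G \<longrightarrow> c \<subseteq> D G"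
    and G: "G \<in> tower D"
  shows "c \<subseteq> G \<or> G \<subseteq> D c"
  using G
proof induct
  case (tower_step G0)
  show ?case
  proof (cases "c \<subseteq> G0")
    case True
    show ?thesis
    proof (cases "c = G0")
      case True then show ?thesis by simp
    next
      case False
      then have "c \<subset> G0" using \<open>c \<subseteq> G0\<close> by blast
      then show ?thesis using ext tower_step by blast
    qed
  next
    case False
    then have "G0 \<subseteq> D c" using tower_step by blast
    then show ?thesis using defl[of G0] by blast
  qed
next
  case (tower_Inter S)
  then show ?case by blast
qed

lemma tower_extreme:
  assumes defl: "\<And>F. D F \<subseteq> F" and c: "c \<in> tower D"
  shows "\<forall>G\<in>tower D. c \<subset> G \<longrightarrow> c \<subseteq> D G"
  using c
proof induct
  case (tower_step c0)
  show ?case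
  proof (intro ballI impI)
    fix G assume G: "G \<in> tower D" "D c0 \<subset> G"
    have "c0 \<subseteq> G \<or> G \<subseteq> D c0" using tower_lemma1[OF defl tower_step(2) G(1)] .
    then have "c0 \<subseteq> G" using G(2) by blast
    show "D c0 \<subseteq> D G"
    proof (cases "c0 = G")
      case True then show ?thesis by simp
    next
      case False
      then have "c0 \<subseteq> D G" using tower_step(2) G(1) \<open>c0 \<subseteq> G\<close> by blast
      then show ?thesis using defl[of c0] by blast
    qed
  qed
next
  case (tower_Inter S)
  show ?case
  proof (intro ballI impI)
    fix G assume G: "G \<in> tower D" "\<Inter>S \<subset> G"
    then obtain s0 where s0: "s0 \<in> S" "\<not> G \<subseteq> s0" by blast
    have ext0: "\<forall>G\<in>tower D. s0 \<subset> G \<longrightarrow> s0 \<subseteq> D G" using tower_Inter s0 by blast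
    have "s0 \<subseteq> G \<or> G \<subseteq> D s0" using tower_lemma1[OF defl ext0 G(1)] .
    then have "s0 \<subseteq> G" using s0(2) defl[of s0] by blast
    then have "s0 \<subset> G" using s0(2) by blast
    then have "s0 \<subseteq> D G" using ext0 G(1) by blast
    then show "\<Inter>S \<subseteq> D G" using s0(1) by blast
  qed
qed

lemma tower_chain:
  assumes defl: "\<And>F. D F \<subseteq> F" and c: "c \<in> tower D" and G: "G \<in> tower D"
  shows "c \<subseteq> G \<or> G \<subseteq> D c"
  using tower_lemma1[OF defl tower_extreme[OF defl c] G] .

lemma tower_closed:
  assumes "\<And>F. closed F \<Longrightarrow> closed (D F)" and "F \<in> tower D"
  shows "closed F"
  using assms(2) by induct (auto simp: assms(1))

lemma discrete_subfamily: assumes "discrete_family \<A>" "\<B> \<subseteq> \<A>" shows "discrete_family \<B>"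
  unfolding discrete_family_def
proof
  fix x
  obtain W where "open W" "x \<in> W" "\<forall>A\<in>\<A>. \<forall>B\<in>\<A>. A \<inter> W \<noteq> {} \<and> B \<inter> W \<noteq> {} \<longrightarrow> A = B"
    using assms(1)[unfolded discrete_family_def, rule_format, of x] by (elim exE conjE)
  then show "\<exists>W. open W \<and> x \<in> W \<and> (\<forall>A\<in>\<B>. \<forall>B\<in>\<B>. A \<inter> W \<noteq> {} \<and> B \<inter> W \<noteq> {} \<longrightarrow> A = B)"
    using assms(2) by (meson subsetD)
qed

lemma discrete_Union_closed:
  assumes d: "discrete_family \<A>" and c: "\<forall>A\<in>\<A>. closed A"
  shows "closed (\<Union>\<A>)"
proof -
  have *: "\<exists>T. open T \<and> z \<in> T \<and> T \<subseteq> - \<Union>\<A>" if z: "z \<in> - \<Union>\<A>" for z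
  proof -
    obtain W where W: "open W" "z \<in> W"
      "\<forall>A\<in>\<A>. \<forall>B\<in>\<A>. A \<inter> W \<noteq> {} \<and> B \<inter> W \<noteq> {} \<longrightarrow> A = B"
      using d[unfolded discrete_family_def, rule_format, of z] by (elim exE conjE) simp
    show ?thesis
    proof (cases "\<exists>A\<in>\<A>. A \<inter> W \<noteq> {}")
      case True
      then obtain A0 where A0: "A0 \<in> \<A>" "A0 \<inter> W \<noteq> {}" by blast
      have "open (W - A0)" using W(1) c A0(1) by (simp add: open_Diff)
      moreover have "z \<in> W - A0" using z W(2) A0(1) by blast
      moreover have "W - A0 \<subseteq> - \<Union>\<A>" using W(3) A0 by blast
      ultimately show ?thesis by blast
    next
      case False
      then show ?thesis using W by blast
    qed
  qed
  have "open (- \<Union>\<A>)" by (rule iffD2[OF open_subopen], rule ballI, rule *)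
  then show ?thesis by (simp add: closed_open)
qed


lemma ltz_ws:
  fixes f :: "'a::metric_space \<Rightarrow> 'b::metric_space"
  assumes "LTZ f" shows "weakly_separated f"
  unfolding weakly_separated_def
proof (intro allI impI)
  fix e :: real assume e: "e > 0"
  obtain \<delta> where d: "\<forall>x. \<delta> x > 0" "\<forall>x y. dist x y < min (\<delta> x) (\<delta> y) \<longrightarrow> dist (f x) (f y) < e"
    using assms e unfolding LTZ_def by blast
  show "\<exists>V::'a \<Rightarrow> 'a set. (\<forall>x. open (V x) \<and> x \<in> V x) \<and>
      (\<forall>x y. (x \<in> V y \<and> y \<in> V x) \<longrightarrow> dist (f x) (f y) < e)"
  proof (intro exI[of _ "\<lambda>x. ball x (\<delta> x)"] conjI allI impI)
    fix x show "open (ball x (\<delta> x))" by simp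
    show "x \<in> ball x (\<delta> x)" using d(1) by simp
  next
    fix x y assume "x \<in> ball y (\<delta> y) \<and> y \<in> ball x (\<delta> x)"
    then have "dist x y < min (\<delta> x) (\<delta> y)" by (simp add: dist_commute)
    then show "dist (f x) (f y) < e" using d(2) by blast
  qed
qed

lemma ws_ltz:
  fixes f :: "'a::metric_space \<Rightarrow> 'b::metric_space"
  assumes "weakly_separated f" shows "LTZ f"
  unfolding LTZ_def
proof (intro allI impI)
  fix e :: real assume e: "e > 0"
  obtain V :: "'a \<Rightarrow> 'a set" where V: "\<forall>x. open (V x) \<and> x \<in> V x"
      "\<forall>x y. (x \<in> V y \<and> y \<in> V x) \<longrightarrow> dist (f x) (f y) < e"
    using assms e unfolding weakly_separated_def by blast
  have "\<forall>x. \<exists>r>0. ball x r \<subseteq> V x" using V(1) open_contains_ball by blast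
  then obtain \<delta> where d: "\<forall>x. \<delta> x > 0 \<and> ball x (\<delta> x) \<subseteq> V x" by metis
  show "\<exists>\<delta>::'a \<Rightarrow> real. (\<forall>x. \<delta> x > 0) \<and>
      (\<forall>x y. dist x y < min (\<delta> x) (\<delta> y) \<longrightarrow> dist (f x) (f y) < e)"
  proof (intro exI[of _ \<delta>] conjI allI impI)
    fix x show "\<delta> x > 0" using d by blast
  next
    fix x y assume "dist x y < min (\<delta> x) (\<delta> y)"
    then have "y \<in> ball x (\<delta> x)" "x \<in> ball y (\<delta> y)" by (simp_all add: dist_commute)
    then have "y \<in> V x" "x \<in> V y" using d by blast+
    then show "dist (f x) (f y) < e" using V(2) by blast
  qed
qed

lemma frag_ws:
  fixes f :: "'a::topological_space \<Rightarrow> 'b::metric_space"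
  assumes fr: "fragmentable f" shows "weakly_separated f"
  unfolding weakly_separated_def
proof (intro allI impI)
  fix e :: real assume e: "e > 0"
  define D where "D F = F - \<Union>{U. open U \<and> diam (f ` (U \<inter> F)) < ereal e}" for F :: "'a set"
  have defl: "\<And>F. D F \<subseteq> F" unfolding D_def by blast
  have Dcl: "closed (D F)" if "closed F" for F
    unfolding D_def using that by (intro closed_Diff open_Union) auto
  define T where "T = tower D"
  have Tcl: "closed F" if "F \<in> T" for F using Dcl that unfolding T_def by (rule tower_closed)
  define Fx where "Fx x = \<Inter>{F\<in>T. x \<in> F}" for x
  have FxT: "Fx x \<in> T" for x unfolding Fx_def T_def by (rule tower_Inter) blast
  have xFx: "x \<in> Fx x" for x unfolding Fx_def by blast
  have nD: "x \<notin> D (Fx x)" for x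
  proof
    assume xD: "x \<in> D (Fx x)"
    have "D (Fx x) \<in> T" using FxT unfolding T_def by (rule tower_step)
    then have sub: "Fx x \<subseteq> D (Fx x)" using xD unfolding Fx_def by blast
    have "closed (Fx x)" "Fx x \<noteq> {}" using Tcl FxT xFx by blast+
    then obtain U where U: "open U" "U \<inter> Fx x \<noteq> {}" "diam (f ` (U \<inter> Fx x)) < ereal e"
      using fr e unfolding fragmentable_def by blast
    have "D (Fx x) \<inter> U = {}" using U(1,3) unfolding D_def by blast
    then show False using sub U(2) by blast
  qed
  have "\<forall>x. \<exists>U. open U \<and> x \<in> U \<and> diam (f ` (U \<inter> Fx x)) < ereal e"
  proof
    fix x
    have "x \<in> Fx x" "x \<notin> D (Fx x)" using xFx nD by blast+
    then show "\<exists>U. open U \<and> x \<in> U \<and> diam (f ` (U \<inter> Fx x)) < ereal e"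
      unfolding D_def by blast
  qed
  then obtain U where U: "\<forall>x. open (U x) \<and> x \<in> U x \<and> diam (f ` (U x \<inter> Fx x)) < ereal e"
    by metis
  define V where "V x = U x - D (Fx x)" for x
  show "\<exists>V::'a \<Rightarrow> 'a set. (\<forall>x. open (V x) \<and> x \<in> V x) \<and>
      (\<forall>x y. (x \<in> V y \<and> y \<in> V x) \<longrightarrow> dist (f x) (f y) < e)"
  proof (intro exI[of _ V] conjI allI impI)
    fix x
    show "open (V x)" unfolding V_def using U Dcl Tcl FxT by (meson open_Diff)
    show "x \<in> V x" unfolding V_def using U nD by blast
  next
    fix x y assume xy: "x \<in> V y \<and> y \<in> V x"
    have ch: "Fx a \<subseteq> Fx b" if "b \<in> V a" for a b
    proof -
      have "Fx a \<subseteq> Fx b \<or> Fx b \<subseteq> D (Fx a)"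
        using FxT[of a] FxT[of b] unfolding T_def by (rule tower_chain[OF defl])
      moreover have "b \<notin> D (Fx a)" using that unfolding V_def by blast
      ultimately show ?thesis using xFx[of b] by blast
    qed
    have "Fx x = Fx y" using ch xy by blast
    then have "x \<in> U x \<inter> Fx x" "y \<in> U x \<inter> Fx x" using U xFx xy unfolding V_def by blast+
    then show "dist (f x) (f y) < e" using U diam_lt by blast
  qed
qed


lemma ltz_glp:
  fixes f :: "'a::metric_space \<Rightarrow> 'b::metric_space"
  assumes "LTZ f" shows "generalized_Lebesgue_property f"
  unfolding generalized_Lebesgue_property_def
proof (intro allI impI)
  fix e :: real assume e: "e > 0"
  obtain \<delta> where d: "\<forall>x. \<delta> x > 0" "\<forall>x y. dist x y < min (\<delta> x) (\<delta> y) \<longrightarrow> dist (f x) (f y) < e/3"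
    using assms e unfolding LTZ_def by (meson divide_pos_pos zero_less_numeral)
  define rr where "rr n = 1 / real (Suc n)" for n
  have rr: "rr n > 0" for n unfolding rr_def by simp
  have "\<forall>n. \<exists>E::nat \<Rightarrow> 'a \<Rightarrow> 'a set.
     (\<forall>m a y. y \<in> E m a \<longrightarrow> ball y (1 / real (Suc m)) \<subseteq> ball a (rr n / 2)) \<and> (\<forall>y. \<exists>m a. y \<in> E m a) \<and>
     (\<forall>m a b y z. a \<noteq> b \<longrightarrow> y \<in> E m a \<longrightarrow> z \<in> E m b \<longrightarrow> 1 / real (Suc m) \<le> dist y z)"
    using stone_sep rr by (metis half_gt_zero)
  then obtain E :: "nat \<Rightarrow> nat \<Rightarrow> 'a \<Rightarrow> 'a set" where E:
    "\<forall>n. (\<forall>m a y. y \<in> E n m a \<longrightarrow> ball y (1 / real (Suc m)) \<subseteq> ball a (rr n / 2)) \<and> (\<forall>y. \<exists>m a. y \<in> E n m a) \<and>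
     (\<forall>m a b y z. a \<noteq> b \<longrightarrow> y \<in> E n m a \<longrightarrow> z \<in> E n m b \<longrightarrow> 1 / real (Suc m) \<le> dist y z)"
    by metis
  have E1: "ball y (1 / real (Suc m)) \<subseteq> ball a (rr n / 2)" if "y \<in> E n m a" for n m a y
    using E that by blast
  have E2: "\<exists>m a. y \<in> E n m a" for n y using E by blast
  have E3: "1 / real (Suc m) \<le> dist y z" if "a \<noteq> b" "y \<in> E n m a" "z \<in> E n m b" for n m a b y z
    using E that by blast
  define X where "X n = {x. rr n < \<delta> x}" for n
  define A where "A n m a = closure (E n m a \<inter> X n)" for n m a
  define DD where "DD i = range (A (fst (prod_decode i)) (snd (prod_decode i)))" for i
  have DDenc: "DD (prod_encode (n,m)) = range (A n m)" for n m unfolding DD_def by simp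
  have disc: "discrete_family (range (A n m))" for n m
    unfolding discrete_family_def
  proof
    fix z :: 'a
    define W where "W = ball z (1 / (2 * real (Suc m)))"
    have "\<forall>P\<in>range (A n m). \<forall>Q\<in>range (A n m). P \<inter> W \<noteq> {} \<and> Q \<inter> W \<noteq> {} \<longrightarrow> P = Q"
    proof (intro ballI impI)
      fix P Q assume PQ: "P \<in> range (A n m)" "Q \<in> range (A n m)" "P \<inter> W \<noteq> {} \<and> Q \<inter> W \<noteq> {}"
      obtain a b where ab: "P = A n m a" "Q = A n m b" using PQ(1,2) by blast
      have "W \<inter> (E n m a \<inter> X n) \<noteq> {}"
        using PQ(3) ab(1) open_Int_closure_eq_empty[of W "E n m a \<inter> X n"] unfolding A_def W_def
        by (metis inf_commute open_ball)
      then obtain y where y: "y \<in> E n m a" "y \<in> W" by blast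
      have "W \<inter> (E n m b \<inter> X n) \<noteq> {}"
        using PQ(3) ab(2) open_Int_closure_eq_empty[of W "E n m b \<inter> X n"] unfolding A_def W_def
        by (metis inf_commute open_ball)
      then obtain y' where y': "y' \<in> E n m b" "y' \<in> W" by blast
      have "dist y y' \<le> dist z y + dist z y'" by (rule dist_triangle3)
      also have "\<dots> < 1 / real (Suc m)"
      proof -
        have h: "2 * (1 / (2 * real (Suc m))) = 1 / real (Suc m)" by (simp add: field_simps)
        have "dist z y < 1 / (2 * real (Suc m))" "dist z y' < 1 / (2 * real (Suc m))"
          using y(2) y'(2) unfolding W_def mem_ball by blast+
        then have "dist z y + dist z y' < 2 * (1 / (2 * real (Suc m)))" by linarith
        then show ?thesis unfolding h .
      qed
      finally have "dist y y' < 1 / real (Suc m)" .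
      then have "a = b" using E3[of a b y n m y'] y y' by force
      then show "P = Q" using ab by simp
    qed
    then show "\<exists>W. open W \<and> z \<in> W \<and> (\<forall>P\<in>range (A n m). \<forall>Q\<in>range (A n m). P \<inter> W \<noteq> {} \<and> Q \<inter> W \<noteq> {} \<longrightarrow> P = Q)"
      unfolding W_def by (intro exI[of _ "ball z (1 / (2 * real (Suc m)))"]) simp
  qed
  have inner: "dist (f y) (f y') < e/3" if "y \<in> E n m a \<inter> X n" "y' \<in> E n m a \<inter> X n" for y y' n m a
  proof -
    have c: "y \<in> ball y (1 / real (Suc m))" "y' \<in> ball y' (1 / real (Suc m))" by simp_all
    have "y \<in> ball a (rr n / 2)" "y' \<in> ball a (rr n / 2)"
      using E1[of y n m a] E1[of y' n m a] that c by blast+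
    then have "dist a y < rr n / 2" "dist a y' < rr n / 2" by simp_all
    moreover have "dist y y' \<le> dist a y + dist a y'" by (rule dist_triangle3)
    ultimately have "dist y y' < rr n" by linarith
    moreover have "rr n < \<delta> y" "rr n < \<delta> y'" using that unfolding X_def by auto
    ultimately show ?thesis using d(2) by simp
  qed
  have approx: "\<exists>y\<in>E n m a \<inter> X n. dist (f z) (f y) < e/3" if zA: "z \<in> A n m a" for z n m a
  proof -
    have "min (\<delta> z) (rr n) > 0" using d(1) rr by simp
    then obtain y where y: "y \<in> E n m a \<inter> X n" "dist y z < min (\<delta> z) (rr n)"
      using zA unfolding A_def closure_approachable by blast
    have "rr n < \<delta> y" using y(1) unfolding X_def by auto
    then have "dist z y < min (\<delta> z) (\<delta> y)" using y(2) by (simp add: dist_commute)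
    then show ?thesis using d(2) y(1) by blast
  qed
  show "\<exists>\<A>::'a set set. sigma_discrete_family \<A> \<and> (\<forall>A\<in>\<A>. closed A) \<and> \<Union>\<A> = UNIV \<and>
      (\<forall>A\<in>\<A>. diam (f ` A) \<le> ereal e)"
  proof (intro exI[of _ "\<Union>i. DD i"] conjI)
    show "sigma_discrete_family (\<Union>i. DD i)"
      unfolding sigma_discrete_family_def
      by (intro exI[of _ DD]) (simp add: DD_def disc)
    show "\<forall>P\<in>(\<Union>i. DD i). closed P" unfolding DD_def A_def by auto
    show "\<Union>(\<Union>i. DD i) = UNIV"
    proof (rule set_eqI, rule iffI)
      fix z :: 'a
      obtain n where n: "rr n < \<delta> z" using arch_suc[of "\<delta> z"] d(1) unfolding rr_def by blast
      obtain m a where ma: "z \<in> E n m a" using E2 by blast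
      have "z \<in> A n m a" unfolding A_def using ma n X_def closure_subset by fastforce
      moreover have "A n m a \<in> DD (prod_encode (n,m))" unfolding DDenc by simp
      ultimately show "z \<in> \<Union>(\<Union>i. DD i)" by blast
    qed simp
    show "\<forall>P\<in>(\<Union>i. DD i). diam (f ` P) \<le> ereal e"
    proof
      fix P assume "P \<in> (\<Union>i. DD i)"
      then obtain n m a where P: "P = A n m a" unfolding DD_def by blast
      show "diam (f ` P) \<le> ereal e"
      proof (rule diam_le)
        fix u v assume "u \<in> f ` P" "v \<in> f ` P"
        then obtain z w where zw: "z \<in> P" "w \<in> P" "u = f z" "v = f w" by blast
        obtain y where y: "y \<in> E n m a \<inter> X n" "dist (f z) (f y) < e/3" using approx zw(1) P by blast
        obtain y' where y': "y' \<in> E n m a \<inter> X n" "dist (f w) (f y') < e/3" using approx zw(2) P by blast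
        have "dist (f y) (f y') < e/3" using inner y(1) y'(1) by blast
        moreover have "dist (f z) (f w) \<le> dist (f z) (f y) + dist (f y) (f y') + dist (f y') (f w)"
          by (smt (verit) dist_commute dist_triangle)
        ultimately show "dist u v \<le> e" using y(2) y'(2) zw(3,4) by (simp add: dist_commute)
      qed
    qed
  qed
qed

lemma glp_borel1:
  fixes f :: "'a::topological_space \<Rightarrow> 'b::metric_space"
  assumes g: "generalized_Lebesgue_property f" shows "Borel1 f"
  unfolding Borel1_def
proof (intro allI impI)
  fix V :: "'b set" assume V: "open V"
  have "\<forall>k. \<exists>DD::nat \<Rightarrow> 'a set set. (\<forall>n. discrete_family (DD n)) \<and> (\<forall>A\<in>(\<Union>n. DD n). closed A) \<and>
      \<Union>(\<Union>n. DD n) = UNIV \<and> (\<forall>A\<in>(\<Union>n. DD n). diam (f ` A) \<le> ereal (1 / real (Suc k)))"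
  proof
    fix k
    have pos: "1 / real (Suc k) > 0" by simp
    from g[unfolded generalized_Lebesgue_property_def, rule_format, OF pos]
    obtain \<A> where A0: "sigma_discrete_family \<A> \<and> (\<forall>A\<in>\<A>. closed A) \<and> \<Union>\<A> = UNIV \<and>
      (\<forall>A\<in>\<A>. diam (f ` A) \<le> ereal (1 / real (Suc k)))" ..
    note A = A0[THEN conjunct1] A0[THEN conjunct2, THEN conjunct1]
      A0[THEN conjunct2, THEN conjunct2, THEN conjunct1] A0[THEN conjunct2, THEN conjunct2, THEN conjunct2]
    from A(1)[unfolded sigma_discrete_family_def]
    obtain DD :: "nat \<Rightarrow> 'a set set" where DD0: "(\<forall>n. discrete_family (DD n)) \<and> \<A> = (\<Union>n. DD n)" ..
    note e = DD0[THEN conjunct2] and dd = DD0[THEN conjunct1]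
    show "\<exists>DD::nat \<Rightarrow> 'a set set. (\<forall>n. discrete_family (DD n)) \<and> (\<forall>A\<in>(\<Union>n. DD n). closed A) \<and>
      \<Union>(\<Union>n. DD n) = UNIV \<and> (\<forall>A\<in>(\<Union>n. DD n). diam (f ` A) \<le> ereal (1 / real (Suc k)))"
      apply (rule exI[of _ DD])
      using dd A(2-4)[unfolded e] by (intro conjI)
  qed
  then obtain DD :: "nat \<Rightarrow> nat \<Rightarrow> 'a set set" where DD: "\<forall>k. (\<forall>n. discrete_family (DD k n)) \<and>
      (\<forall>A\<in>(\<Union>n. DD k n). closed A) \<and> \<Union>(\<Union>n. DD k n) = UNIV \<and>
      (\<forall>A\<in>(\<Union>n. DD k n). diam (f ` A) \<le> ereal (1 / real (Suc k)))"
    by metis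
  have DDk: "(\<forall>n. discrete_family (DD k n)) \<and>
      (\<forall>A\<in>(\<Union>n. DD k n). closed A) \<and> \<Union>(\<Union>n. DD k n) = UNIV \<and>
      (\<forall>A\<in>(\<Union>n. DD k n). diam (f ` A) \<le> ereal (1 / real (Suc k)))" for k
    using DD by (rule spec)
  have D1: "discrete_family (DD k n)" for k n using DDk[of k, THEN conjunct1] by blast
  have D2: "closed A" if "A \<in> DD k n" for A k n using DDk[of k, THEN conjunct2, THEN conjunct1] that by blast
  have D3: "\<exists>n A. A \<in> DD k n \<and> z \<in> A" for k z
  proof -
    have "z \<in> \<Union>(\<Union>n. DD k n)" unfolding DDk[of k, THEN conjunct2, THEN conjunct2, THEN conjunct1] by simp
    then show ?thesis by blast
  qed
  have D4: "diam (f ` A) \<le> ereal (1 / real (Suc k))" if "A \<in> DD k n" for A k n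
    using DDk[of k, THEN conjunct2, THEN conjunct2, THEN conjunct2] that by blast
  define B where "B k n = \<Union>{A \<in> DD k n. \<exists>x\<in>A. ball (f x) (2 / real (Suc k)) \<subseteq> V}" for k n
  have Bcl: "closed (B k n)" for k n
    unfolding B_def
  proof (rule discrete_Union_closed)
    show "discrete_family {A \<in> DD k n. \<exists>x\<in>A. ball (f x) (2 / real (Suc k)) \<subseteq> V}"
      using D1 by (rule discrete_subfamily) blast
    show "\<forall>A\<in>{A \<in> DD k n. \<exists>x\<in>A. ball (f x) (2 / real (Suc k)) \<subseteq> V}. closed A"
      using D2 by blast
  qed
  have eq: "f -` V = (\<Union>i. B (fst (prod_decode i)) (snd (prod_decode i)))"
  proof (rule set_eqI, rule iffI)
    fix z assume "z \<in> f -` V"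
    then obtain r where r: "r > 0" "ball (f z) r \<subseteq> V" using V open_contains_ball by blast
    obtain k where k: "1 / real (Suc k) < r / 2" using arch_suc[of "r/2"] r by auto
    obtain n A where A: "A \<in> DD k n" "z \<in> A" using D3 by blast
    have "ball (f z) (2 / real (Suc k)) \<subseteq> ball (f z) r" using k by (intro subset_ball) simp
    then have "z \<in> B k n" unfolding B_def using A r(2) by blast
    then show "z \<in> (\<Union>i. B (fst (prod_decode i)) (snd (prod_decode i)))"
      by (intro UN_I[of "prod_encode (k,n)"]) simp_all
  next
    fix z assume "z \<in> (\<Union>i. B (fst (prod_decode i)) (snd (prod_decode i)))"
    then obtain k n where "z \<in> B k n" by blast
    then obtain A x where A: "A \<in> DD k n" "z \<in> A" "x \<in> A" "ball (f x) (2 / real (Suc k)) \<subseteq> V"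
      unfolding B_def by blast
    have "diam (f ` A) \<le> ereal (1 / real (Suc k))" using D4 A(1) by blast
    then have "dist (f x) (f z) \<le> 1 / real (Suc k)" using diam_le_dist A(2,3) by blast
    also have "\<dots> < 2 / real (Suc k)" by (simp add: divide_strict_right_mono)
    finally show "z \<in> f -` V" using A(4) by auto
  qed
  show "fsigma_in euclidean (f -` V)"
    unfolding fsigma_in_def union_of_def eq
    by (intro exI[of _ "range (\<lambda>i. B (fst (prod_decode i)) (snd (prod_decode i)))"])
       (auto simp: Bcl closed_closedin[symmetric])
qed


lemma discrete_countable:
  fixes \<D> :: "'a::metric_space set set"
  assumes sep: "separable_space (euclidean::'a topology)" and d: "discrete_family \<D>"
  shows "countable \<D>"
proof -
  obtain C :: "'a set" where C: "countable C" "closure C = UNIV"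
    using sep unfolding separable_space_def by auto
  define P where "P A c k \<longleftrightarrow> A \<inter> ball c (1 / real (Suc k)) \<noteq> {} \<and>
     (\<forall>B\<in>\<D>. B \<inter> ball c (1 / real (Suc k)) \<noteq> {} \<longrightarrow> B = A)" for A c k
  have ex: "\<exists>p. p \<in> C \<times> UNIV \<and> P A (fst p) (snd p)" if A: "A \<in> \<D> - {{}}" for A
  proof -
    obtain x where x: "x \<in> A" using A by blast
    from d[unfolded discrete_family_def, rule_format, of x]
    obtain W where W: "open W \<and> x \<in> W \<and> (\<forall>A\<in>\<D>. \<forall>B\<in>\<D>. A \<inter> W \<noteq> {} \<and> B \<inter> W \<noteq> {} \<longrightarrow> A = B)" ..
    note Wo = W[THEN conjunct1] and Wx = W[THEN conjunct2, THEN conjunct1]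
      and Wd = W[THEN conjunct2, THEN conjunct2]
    obtain e where e: "e > 0" "ball x e \<subseteq> W" using Wo Wx open_contains_ball by blast
    obtain k where k: "1 / real (Suc k) < e / 2" using arch_suc[of "e/2"] e by auto
    have "x \<in> closure C" using C by simp
    then obtain c where c: "c \<in> C" "dist c x < 1 / real (Suc k)"
      unfolding closure_approachable by (meson of_nat_0_less_iff zero_less_Suc divide_pos_pos zero_less_one)
    have sub: "ball c (1 / real (Suc k)) \<subseteq> W"
    proof
      fix z assume "z \<in> ball c (1 / real (Suc k))"
      then have "dist c z < 1 / real (Suc k)" by simp
      moreover have "dist x z \<le> dist c x + dist c z" by (rule dist_triangle3)
      ultimately have "dist x z < e" using c(2) k by linarith
      then show "z \<in> W" using e(2) by auto
    qed
    have xb: "x \<in> ball c (1 / real (Suc k))" using c(2) by simp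
    have "P A c k" unfolding P_def
    proof (intro conjI ballI impI)
      show "A \<inter> ball c (1 / real (Suc k)) \<noteq> {}" using x xb by blast
    next
      fix B assume B: "B \<in> \<D>" "B \<inter> ball c (1 / real (Suc k)) \<noteq> {}"
      have "B \<inter> W \<noteq> {}" using B(2) sub by blast
      moreover have "A \<inter> W \<noteq> {}" using x Wx by blast
      ultimately show "B = A" using Wd B(1) A by blast
    qed
    then show ?thesis using c(1) by (intro exI[of _ "(c,k)"]) simp
  qed
  then obtain g where g: "\<forall>A\<in>\<D> - {{}}. g A \<in> C \<times> UNIV \<and> P A (fst (g A)) (snd (g A))"
    using bchoice[of "\<D> - {{}}" "\<lambda>A p. p \<in> C \<times> UNIV \<and> P A (fst p) (snd p)"] by blast
  have inj: "inj_on g (\<D> - {{}})"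
  proof (rule inj_onI)
    fix A A' assume AA: "A \<in> \<D> - {{}}" "A' \<in> \<D> - {{}}" "g A = g A'"
    have "P A (fst (g A)) (snd (g A))" "P A' (fst (g A)) (snd (g A))" using g AA by metis+
    then show "A = A'" using AA(1,2) unfolding P_def by blast
  qed
  have "g ` (\<D> - {{}}) \<subseteq> C \<times> (UNIV :: nat set)" using g by blast
  moreover have "countable (C \<times> (UNIV :: nat set))" using C(1) by simp
  ultimately have "countable (g ` (\<D> - {{}}))" by (rule countable_subset)
  then have "countable (\<D> - {{}})" using inj by (rule countable_image_inj_on)
  then have "countable (insert {} (\<D> - {{}}))" by simp
  moreover have "\<D> \<subseteq> insert {} (\<D> - {{}})" by blast
  ultimately show ?thesis using countable_subset by blast
qed

lemma glp_leb:
  fixes f :: "'a::metric_space \<Rightarrow> 'b::metric_space"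
  assumes sep: "separable_space (euclidean::'a topology)" and g: "generalized_Lebesgue_property f"
  shows "Lebesgue_property f"
  unfolding Lebesgue_property_def
proof (intro allI impI)
  fix e :: real assume e: "e > 0"
  from g[unfolded generalized_Lebesgue_property_def, rule_format, OF e]
  obtain \<A> :: "'a set set" where A0: "sigma_discrete_family \<A> \<and> (\<forall>A\<in>\<A>. closed A) \<and> \<Union>\<A> = UNIV \<and>
      (\<forall>A\<in>\<A>. diam (f ` A) \<le> ereal e)" ..
  note A = A0[THEN conjunct1] A0[THEN conjunct2, THEN conjunct1]
    A0[THEN conjunct2, THEN conjunct2, THEN conjunct1] A0[THEN conjunct2, THEN conjunct2, THEN conjunct2]
  from A(1)[unfolded sigma_discrete_family_def]
  obtain DD :: "nat \<Rightarrow> 'a set set" where DD0: "(\<forall>n. discrete_family (DD n)) \<and> \<A> = (\<Union>n. DD n)" ..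
  have "countable (DD n)" for n using DD0 discrete_countable[OF sep] by blast
  then have cA: "countable \<A>" using DD0 by simp
  have neA: "\<A> \<noteq> {}" using A(3) by auto
  define C where "C = from_nat_into \<A>"
  have rC: "range C = \<A>" unfolding C_def using cA neA by (rule range_from_nat_into[rotated])
  have CA: "C n \<in> \<A>" for n using rC by blast
  show "\<exists>C::nat \<Rightarrow> 'a set. (\<forall>n. closed (C n)) \<and> (\<Union>n. C n) = UNIV \<and> (\<forall>n. diam (f ` C n) \<le> ereal e)"
  proof (intro exI[of _ C] conjI allI)
    fix n show "closed (C n)" using CA A(2) by blast
  next
    show "(\<Union>n. C n) = UNIV" using rC A(3) by simp
  next
    fix n show "diam (f ` C n) \<le> ereal e" using CA A(4) by blast
  qed
qed

lemma ws_hb_frag: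
  fixes f :: "'a::metric_space \<Rightarrow> 'b::metric_space"
  assumes hB: "hereditarily_Baire (euclidean::'a topology)" and ws: "weakly_separated f"
  shows "fragmentable f"
  unfolding fragmentable_def
proof (intro allI impI)
  fix e :: real and F :: "'a set" assume e: "e > 0" and F: "closed F \<and> F \<noteq> {}"
  have e4: "e/4 > 0" using e by simp
  from ws_ltz[OF ws, unfolded LTZ_def, rule_format, OF e4]
  obtain \<delta> where d0: "(\<forall>x. \<delta> x > 0) \<and> (\<forall>x y. dist x y < min (\<delta> x) (\<delta> y) \<longrightarrow> dist (f x) (f y) < e/4)" ..
  have d1: "\<delta> x > 0" for x using d0 by blast
  have d2: "dist (f x) (f y) < e/4" if "dist x y < min (\<delta> x) (\<delta> y)" for x y using d0 that by blast
  define rr where "rr n = 1 / real (Suc n)" for n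
  have rr: "rr n > 0" for n unfolding rr_def by simp
  define X where "X n = {x. rr n < \<delta> x}" for n
  have cov: "UNIV \<inter> F \<subseteq> \<Union>(range (\<lambda>n. closure (X n \<inter> F)))"
  proof
    fix z assume z: "z \<in> UNIV \<inter> F"
    obtain n where "rr n < \<delta> z" using arch_suc[of "\<delta> z"] d1 unfolding rr_def by blast
    then have "z \<in> closure (X n \<inter> F)" using z closure_subset unfolding X_def by fastforce
    then show "z \<in> \<Union>(range (\<lambda>n. closure (X n \<inter> F)))" by blast
  qed
  obtain C where C: "C \<in> range (\<lambda>n. closure (X n \<inter> F))"
     "\<exists>U. open U \<and> U \<inter> F \<noteq> {} \<and> U \<inter> F \<subseteq> C \<inter> UNIV"
    using baire_piece[OF hB _ _ _ _ _ cov] F by auto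
  then obtain n U where U: "C = closure (X n \<inter> F)" "open U" "U \<inter> F \<noteq> {}" "U \<inter> F \<subseteq> closure (X n \<inter> F)"
    by auto
  have "U \<inter> closure (X n \<inter> F) \<noteq> {}" using U by blast
  then have "U \<inter> (X n \<inter> F) \<noteq> {}" using open_Int_closure_eq_empty[OF U(2)] by blast
  then obtain p where p: "p \<in> U" "p \<in> X n" "p \<in> F" by blast
  define U' where "U' = U \<inter> ball p (rr n / 2)"
  have oU': "open U'" unfolding U'_def using U(2) by (intro open_Int open_ball)
  have pU': "p \<in> U' \<inter> F" unfolding U'_def using p rr by simp
  have approx: "\<exists>y\<in>X n \<inter> F \<inter> U'. dist (f z) (f y) < e/4" if z: "z \<in> U' \<inter> F" for z
  proof -
    obtain t where t: "t > 0" "ball z t \<subseteq> U'" using oU' z open_contains_ball by blast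
    have zc: "z \<in> closure (X n \<inter> F)" using z U(4) unfolding U'_def by blast
    have "min (min t (\<delta> z)) (rr n) > 0" using t d1 rr by simp
    then obtain y where y: "y \<in> X n \<inter> F" "dist y z < min (min t (\<delta> z)) (rr n)"
      using zc unfolding closure_approachable by blast
    have "y \<in> U'" using y(2) t(2) by (auto simp: dist_commute)
    moreover have "rr n < \<delta> y" using y(1) unfolding X_def by auto
    then have "dist z y < min (\<delta> z) (\<delta> y)" using y(2) by (simp add: dist_commute)
    then have "dist (f z) (f y) < e/4" by (rule d2)
    ultimately show ?thesis using y(1) by blast
  qed
  have inner: "dist (f y) (f y') < e/4" if "y \<in> X n \<inter> F \<inter> U'" "y' \<in> X n \<inter> F \<inter> U'" for y y'
  proof -
    have "dist p y < rr n / 2" "dist p y' < rr n / 2" using that unfolding U'_def by auto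
    moreover have "dist y y' \<le> dist p y + dist p y'" by (rule dist_triangle3)
    ultimately have "dist y y' < rr n" by linarith
    moreover have "rr n < \<delta> y" "rr n < \<delta> y'" using that unfolding X_def by auto
    ultimately show ?thesis using d2 by simp
  qed
  have "diam (f ` (U' \<inter> F)) \<le> ereal (3 * e / 4)"
  proof (rule diam_le)
    fix u v assume "u \<in> f ` (U' \<inter> F)" "v \<in> f ` (U' \<inter> F)"
    then obtain z w where zw: "z \<in> U' \<inter> F" "w \<in> U' \<inter> F" "u = f z" "v = f w" by blast
    obtain y where y: "y \<in> X n \<inter> F \<inter> U'" "dist (f z) (f y) < e/4" using approx zw(1) by blast
    obtain y' where y': "y' \<in> X n \<inter> F \<inter> U'" "dist (f w) (f y') < e/4" using approx zw(2) by blast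
    have "dist (f y) (f y') < e/4" using inner y(1) y'(1) by blast
    moreover have "dist (f z) (f w) \<le> dist (f z) (f y) + dist (f y) (f y') + dist (f y') (f w)"
      by (smt (verit) dist_commute dist_triangle)
    ultimately show "dist u v \<le> 3 * e / 4" using y(2) y'(2) zw(3,4) by (simp add: dist_commute)
  qed
  also have "\<dots> < ereal e" using e by simp
  finally show "\<exists>U. open U \<and> U \<inter> F \<noteq> {} \<and> diam (f ` (U \<inter> F)) < ereal e"
    using oU' pU' by blast
qed

lemma fragE:
  assumes "fragmentable f" "e > 0" "closed F" "F \<noteq> {}"
  shows "\<exists>U. open U \<and> U \<inter> F \<noteq> {} \<and> diam (f ` (U \<inter> F)) < ereal e"
  using assms(1)[unfolded fragmentable_def, rule_format, OF assms(2) conjI[OF assms(3,4)]] .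

lemma frag_pcp:
  fixes f :: "'a::metric_space \<Rightarrow> 'b::metric_space"
  assumes hB: "hereditarily_Baire (euclidean::'a topology)" and fr: "fragmentable f"
  shows "PCP f"
  unfolding PCP_def
proof (intro allI impI)
  fix F :: "'a set" assume F: "closed F \<and> F \<noteq> {}"
  define G where "G n = \<Union>{U. open U \<and> diam (f ` (U \<inter> F)) < ereal (1 / real (Suc n))}" for n
  have oG: "open (G n)" for n unfolding G_def by auto
  have "\<exists>x\<in>F. \<forall>n. x \<in> G n"
  proof (rule ccontr)
    assume H: "\<not> ?thesis"
    have cov: "UNIV \<inter> F \<subseteq> \<Union>(range (\<lambda>n. F - G n))" using H by blast
    have cl: "\<forall>C\<in>range (\<lambda>n. F - G n). closed C" using F oG by (auto intro: closed_Diff)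
    obtain C where C: "C \<in> range (\<lambda>n. F - G n)"
       "\<exists>U. open U \<and> U \<inter> F \<noteq> {} \<and> U \<inter> F \<subseteq> C \<inter> UNIV"
      using baire_piece[OF hB _ _ _ _ cl cov] F by auto
    then obtain n U where U: "open U" "U \<inter> F \<noteq> {}" "U \<inter> F \<subseteq> F - G n" by auto
    have cl1: "closed (closure (U \<inter> F))" and ne1: "closure (U \<inter> F) \<noteq> {}" using U(2) by auto
    have pos: "1 / real (Suc n) > 0" by simp
    from fragE[OF fr pos cl1 ne1]
    obtain U' where U'0: "open U' \<and> U' \<inter> closure (U \<inter> F) \<noteq> {} \<and>
      diam (f ` (U' \<inter> closure (U \<inter> F))) < ereal (1 / real (Suc n))" ..
    note U' = U'0[THEN conjunct1] U'0[THEN conjunct2, THEN conjunct1] U'0[THEN conjunct2, THEN conjunct2]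
    have "U' \<inter> (U \<inter> F) \<noteq> {}" using U'(2) open_Int_closure_eq_empty[OF U'(1)] by blast
    then obtain q where q: "q \<in> U'" "q \<in> U" "q \<in> F" by blast
    have "(U' \<inter> U) \<inter> F \<subseteq> U' \<inter> closure (U \<inter> F)" using closure_subset[of "U \<inter> F"] by auto
    then have "diam (f ` ((U' \<inter> U) \<inter> F)) \<le> diam (f ` (U' \<inter> closure (U \<inter> F)))"
      by (intro diam_mono image_mono)
    then have "diam (f ` ((U' \<inter> U) \<inter> F)) < ereal (1 / real (Suc n))" using U'(3) by simp
    moreover have "open (U' \<inter> U)" using U'(1) U(1) by (rule open_Int)
    ultimately have "U' \<inter> U \<subseteq> G n" unfolding G_def by blast
    then show False using q U(3) by blast
  qed
  then obtain x where x: "x \<in> F" "\<forall>n. x \<in> G n" by blast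
  show "\<exists>x\<in>F. (f \<longlongrightarrow> f x) (at x within F)"
  proof (intro bexI[OF _ x(1)])
    show "(f \<longlongrightarrow> f x) (at x within F)"
      unfolding tendsto_iff
    proof (intro allI impI)
      fix e :: real assume e: "e > 0"
      obtain n where n: "1 / real (Suc n) < e" using arch_suc[OF e] by blast
      obtain U where U: "open U" "x \<in> U" "diam (f ` (U \<inter> F)) < ereal (1 / real (Suc n))"
        using x(2) unfolding G_def by blast
      have "dist (f y) (f x) < e" if "y \<in> U" "y \<in> F" for y
      proof -
        have "dist (f y) (f x) < 1 / real (Suc n)"
          using diam_lt[OF U(3)] that U(2) x(1) by blast
        then show ?thesis using n by linarith
      qed
      then show "eventually (\<lambda>y. dist (f y) (f x) < e) (at x within F)"
        unfolding eventually_at_topological using U(1,2) by blast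
    qed
  qed
qed


lemma fst_decode_le: "fst (prod_decode n) \<le> n"
  by (metis le_prod_encode_1 prod.collapse prod_decode_inverse)

lemma borel1_pieces:
  fixes f :: "'a::topological_space \<Rightarrow> 'b::metric_space"
  assumes "Borel1 f" "open W"
  shows "\<exists>\<C>. countable \<C> \<and> (\<forall>C\<in>\<C>. closed C) \<and> f -` W = \<Union>\<C>"
proof -
  have "fsigma_in euclidean (f -` W)" using assms unfolding Borel1_def by blast
  then have "\<exists>\<U>. countable \<U> \<and> \<U> \<subseteq> Collect (closedin euclidean) \<and> \<Union>\<U> = f -` W"
    unfolding fsigma_in_def union_of_def .
  then obtain \<U> where U: "countable \<U> \<and> \<U> \<subseteq> Collect (closedin euclidean) \<and> \<Union>\<U> = f -` W" ..
  have "\<forall>C\<in>\<U>. closed C" using U unfolding closed_closedin by blast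
  then show ?thesis using U by metis
qed

lemma borel1_piecesE:
  fixes f :: "'a::topological_space \<Rightarrow> 'b::metric_space"
  assumes "Borel1 f" "open W"
  obtains \<C> where "countable \<C>" "\<forall>C\<in>\<C>. closed C" "f -` W = \<Union>\<C>"
proof -
  from borel1_pieces[OF assms]
  obtain \<C> where "countable \<C> \<and> (\<forall>C\<in>\<C>. closed C) \<and> f -` W = \<Union>\<C>" ..
  then show thesis by (elim conjE) (rule that)
qed

lemma borel_frag:
  fixes f :: "'a::metric_space \<Rightarrow> 'b::metric_space"
  assumes hB: "hereditarily_Baire (euclidean::'a topology)" and B1: "Borel1 f"
  shows "fragmentable f"
  unfolding fragmentable_def
proof (intro allI impI)
  fix e :: real and F :: "'a set" assume e: "e > 0" and F0: "closed F \<and> F \<noteq> {}"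
  have Fc: "closed F" and Fne: "F \<noteq> {}" using F0 by auto
  show "\<exists>U. open U \<and> U \<inter> F \<noteq> {} \<and> diam (f ` (U \<inter> F)) < ereal e"
  proof (rule ccontr)
    assume NF: "\<not> ?thesis"
    have NF': "\<not> (U \<inter> F \<subseteq> f -` Q)" if U: "open U" "U \<inter> F \<noteq> {}" and Q: "Q \<subseteq> ball a (e/3)" for U Q a
    proof
      assume sub: "U \<inter> F \<subseteq> f -` Q"
      have "diam (f ` (U \<inter> F)) \<le> ereal (2 * e / 3)"
      proof (rule diam_le)
        fix u v assume "u \<in> f ` (U \<inter> F)" "v \<in> f ` (U \<inter> F)"
        then have "u \<in> ball a (e/3)" "v \<in> ball a (e/3)" using sub Q by blast+
        then have "dist a u < e/3" "dist a v < e/3" by simp_all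
        moreover have "dist u v \<le> dist a u + dist a v" by (rule dist_triangle3)
        ultimately show "dist u v \<le> 2 * e / 3" by linarith
      qed
      also have "\<dots> < ereal e" using e by simp
      finally show False using NF U by blast
    qed
    have e3: "e / 3 > 0" using e by simp
    from stone_sep[OF e3]
    obtain E :: "nat \<Rightarrow> 'b \<Rightarrow> 'b set" where E0:
      "(\<forall>m a y. y \<in> E m a \<longrightarrow> ball y (1 / real (Suc m)) \<subseteq> ball a (e/3)) \<and> (\<forall>y. \<exists>m a. y \<in> E m a) \<and>
       (\<forall>m a b y z. a \<noteq> b \<longrightarrow> y \<in> E m a \<longrightarrow> z \<in> E m b \<longrightarrow> 1 / real (Suc m) \<le> dist y z)" ..
    have E1: "ball y (1 / real (Suc m)) \<subseteq> ball a (e/3)" if "y \<in> E m a" for m a y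
      using E0[THEN conjunct1] that by blast
    have E2: "\<exists>m a. y \<in> E m a" for y using E0[THEN conjunct2, THEN conjunct1] by blast
    have E3: "1 / real (Suc m) \<le> dist y z" if "a \<noteq> b" "y \<in> E m a" "z \<in> E m b" for m a b y z
      using E0[THEN conjunct2, THEN conjunct2] that by blast
    define Ob where "Ob m a = (\<Union>y\<in>E m a. ball y (1 / (3 * real (Suc m))))" for m a
    have O_open: "open (Ob m a)" for m a unfolding Ob_def by (intro open_UN ballI open_ball)
    have O_sub: "Ob m a \<subseteq> ball a (e/3)" for m a
    proof
      fix z assume "z \<in> Ob m a"
      then obtain y where y: "y \<in> E m a" "z \<in> ball y (1 / (3 * real (Suc m)))" unfolding Ob_def by blast
      have "ball y (1 / (3 * real (Suc m))) \<subseteq> ball y (1 / real (Suc m))"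
        by (rule subset_ball) (simp add: field_simps)
      then show "z \<in> ball a (e/3)" using E1[OF y(1)] y(2) by blast
    qed
    have O_cov: "\<exists>m a. y \<in> Ob m a" for y
    proof -
      obtain m a where "y \<in> E m a" using E2 by blast
      moreover have "y \<in> ball y (1 / (3 * real (Suc m)))" by simp
      ultimately show ?thesis unfolding Ob_def by blast
    qed
    have O_disj: "a = b" if z1: "z \<in> Ob m a" and z2: "z \<in> Ob m b" for z m a b
    proof (rule ccontr)
      assume ab: "a \<noteq> b"
      obtain y where y0: "y \<in> E m a" "z \<in> ball y (1 / (3 * real (Suc m)))" using z1 unfolding Ob_def by blast
      then have y: "y \<in> E m a" "dist y z < 1 / (3 * real (Suc m))" unfolding mem_ball by blast+
      obtain y' where y0': "y' \<in> E m b" "z \<in> ball y' (1 / (3 * real (Suc m)))" using z2 unfolding Ob_def by blast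
      then have y': "y' \<in> E m b" "dist y' z < 1 / (3 * real (Suc m))" unfolding mem_ball by blast+
      have "1 / real (Suc m) \<le> dist y y'" using E3[OF ab y(1) y'(1)] .
      moreover have "dist y y' \<le> dist y z + dist y' z" by (rule dist_triangle2)
      ultimately have "1 / real (Suc m) < 2 * (1 / (3 * real (Suc m)))" using y(2) y'(2) by linarith
      moreover have "2 * (1 / (3 * real (Suc m))) < 1 / real (Suc m)" by (simp add: field_simps)
      ultimately show False by linarith
    qed
    have "\<forall>m. \<exists>\<C>. countable \<C> \<and> (\<forall>C\<in>\<C>. closed C) \<and> f -` (\<Union>a. Ob m a) = \<Union>\<C>"
      using borel1_pieces[OF B1] O_open by (simp add: open_UN)
    then obtain CC where CC: "\<forall>m. countable (CC m) \<and> (\<forall>C\<in>CC m. closed C) \<and> f -` (\<Union>a. Ob m a) = \<Union>(CC m)"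
      by metis
    have CCm: "countable (CC m) \<and> (\<forall>C\<in>CC m. closed C) \<and> f -` (\<Union>a. Ob m a) = \<Union>(CC m)" for m
      using CC by (rule spec)
    have CC1: "countable (CC m)" for m using CCm[of m, THEN conjunct1] .
    have CC2: "closed C" if "C \<in> CC m" for C m using CCm[of m, THEN conjunct2, THEN conjunct1] that by blast
    have CC3: "f -` (\<Union>a. Ob m a) = \<Union>(CC m)" for m using CCm[of m, THEN conjunct2, THEN conjunct2] .
    have covF: "UNIV \<inter> F \<subseteq> \<Union>(\<Union>m. CC m)"
    proof
      fix z assume "z \<in> UNIV \<inter> F"
      obtain m a where "f z \<in> Ob m a" using O_cov by blast
      then have "z \<in> \<Union>(CC m)" unfolding CC3[symmetric] by blast
      then show "z \<in> \<Union>(\<Union>m. CC m)" by blast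
    qed
    have "\<exists>C\<in>(\<Union>m. CC m). \<exists>U. open U \<and> U \<inter> F \<noteq> {} \<and> U \<inter> F \<subseteq> C \<inter> UNIV"
      by (rule baire_piece[OF hB Fc _ _ _ _ covF]) (use Fne CC1 CC2 in auto)
    then obtain m0 C U0 where C: "C \<in> CC m0" and U0: "open U0" "U0 \<inter> F \<noteq> {}" "U0 \<inter> F \<subseteq> C"
      by blast
    have R: "f p \<in> (\<Union>a. Ob m0 a)" if "p \<in> U0 \<inter> F" for p
    proof -
      have "p \<in> f -` (\<Union>a. Ob m0 a)" unfolding CC3 using that U0(3) C by blast
      then show ?thesis by simp
    qed
    define Oz where "Oz a = Ob m0 a" for a
    define \<psi> where "\<psi> p = (SOME a. f p \<in> Oz a)" for p
    have psi: "f p \<in> Oz (\<psi> p)" if "p \<in> U0 \<inter> F" for p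
    proof -
      have "\<exists>a. f p \<in> Oz a" using R[OF that] unfolding Oz_def by blast
      then show ?thesis unfolding \<psi>_def by (rule someI_ex)
    qed
    have psi_u: "\<psi> p = a" if "p \<in> U0 \<inter> F" "f p \<in> Oz a" for p a
      using O_disj psi[OF that(1)] that(2) unfolding Oz_def by blast
    have avoid1: "\<exists>V'. open V' \<and> V' \<subseteq> V \<and> V' \<inter> F \<noteq> {} \<and> (\<forall>q\<in>V' \<inter> F. \<psi> q \<noteq> a)"
      if V: "open V" "V \<inter> F \<noteq> {}" "V \<subseteq> U0" for V a
    proof -
      obtain \<C>1 where C1: "countable \<C>1" "\<forall>C\<in>\<C>1. closed C" "f -` Oz a = \<Union>\<C>1"
        by (rule borel1_piecesE[OF B1, of "Oz a"]) (unfold Oz_def, intro open_UN ballI O_open)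
      obtain \<C>2 where C2: "countable \<C>2" "\<forall>C\<in>\<C>2. closed C" "f -` (\<Union>b\<in>-{a}. Oz b) = \<Union>\<C>2"
        by (rule borel1_piecesE[OF B1, of "\<Union>b\<in>-{a}. Oz b"]) (unfold Oz_def, intro open_UN ballI O_open)
      have cov: "V \<inter> F \<subseteq> \<Union>(\<C>1 \<union> \<C>2)"
      proof
        fix q assume q: "q \<in> V \<inter> F"
        then have qU: "q \<in> U0 \<inter> F" using V(3) by blast
        show "q \<in> \<Union>(\<C>1 \<union> \<C>2)"
        proof (cases "\<psi> q = a")
          case True
          then have "q \<in> f -` Oz a" using psi[OF qU] by simp
          then show ?thesis using C1(3) by blast
        next
          case False
          then have "q \<in> f -` (\<Union>b\<in>-{a}. Oz b)" using psi[OF qU] by blast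
          then show ?thesis using C2(3) by blast
        qed
      qed
      have "\<exists>C\<in>\<C>1 \<union> \<C>2. \<exists>U. open U \<and> U \<inter> F \<noteq> {} \<and> U \<inter> F \<subseteq> C \<inter> V"
        by (rule baire_piece[OF hB Fc V(1) V(2) _ _ cov]) (use C1 C2 in auto)
      then obtain C U where CU: "C \<in> \<C>1 \<union> \<C>2" "open U" "U \<inter> F \<noteq> {}" "U \<inter> F \<subseteq> C \<inter> V" by blast
      show ?thesis
      proof (cases "C \<in> \<C>1")
        case True
        then have sub1: "U \<inter> F \<subseteq> f -` Oz a" using CU(4) C1(3) by blast
        have sub2: "Oz a \<subseteq> ball a (e/3)" unfolding Oz_def by (rule O_sub)
        have False using NF'[OF CU(2) CU(3) sub2] sub1 by (rule notE)
        then show ?thesis ..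
      next
        case False
        then have C2': "C \<in> \<C>2" using CU(1) by blast
        show ?thesis
        proof (intro exI[of _ "U \<inter> V"] conjI ballI)
          show "open (U \<inter> V)" using CU(2) V(1) by (rule open_Int)
          show "U \<inter> V \<subseteq> V" by blast
          show "U \<inter> V \<inter> F \<noteq> {}" using CU(3,4) by blast
        next
          fix q assume q: "q \<in> U \<inter> V \<inter> F"
          then have "f q \<in> (\<Union>b\<in>-{a}. Oz b)" using C2' C2(3) CU(4) by blast
          then obtain b where b: "b \<noteq> a" "f q \<in> Oz b" by blast
          have "q \<in> U0 \<inter> F" using q V(3) by blast
          then have "\<psi> q = b" using psi_u b(2) by blast
          then show "\<psi> q \<noteq> a" using b(1) by simp
        qed
      qed
    qed
    have avoid: "\<exists>V'. open V' \<and> V' \<subseteq> V \<and> V' \<inter> F \<noteq> {} \<and> (\<forall>q\<in>V' \<inter> F. \<psi> q \<notin> T)"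
      if "finite T" "open V" "V \<inter> F \<noteq> {}" "V \<subseteq> U0" for T V
      using that
    proof (induction T arbitrary: V rule: finite_induct)
      case empty
      then show ?case by blast
    next
      case (insert a T)
      from insert.IH[OF insert.prems]
      obtain V1 where V10: "open V1 \<and> V1 \<subseteq> V \<and> V1 \<inter> F \<noteq> {} \<and> (\<forall>q\<in>V1 \<inter> F. \<psi> q \<notin> T)" ..
      then have V1: "open V1" "V1 \<subseteq> V" "V1 \<inter> F \<noteq> {}" "\<forall>q\<in>V1 \<inter> F. \<psi> q \<notin> T" by blast+
      have "V1 \<subseteq> U0" using V1(2) insert.prems(3) by (rule order.trans)
      from avoid1[OF V1(1) V1(3) this]
      obtain V2 where V20: "open V2 \<and> V2 \<subseteq> V1 \<and> V2 \<inter> F \<noteq> {} \<and> (\<forall>q\<in>V2 \<inter> F. \<psi> q \<noteq> a)" ..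
      then have V2: "open V2" "V2 \<subseteq> V1" "V2 \<inter> F \<noteq> {}" "\<forall>q\<in>V2 \<inter> F. \<psi> q \<noteq> a" by blast+
      have "\<forall>q\<in>V2 \<inter> F. \<psi> q \<notin> insert a T" using V1(4) V2(2,4) by blast
      moreover have "V2 \<subseteq> V" using V2(2) V1(2) by (rule order.trans)
      ultimately show ?case using V2(1,3) by blast
    qed
    obtain x0 where x0: "x0 \<in> U0" "x0 \<in> F" using U0(2) by blast
    obtain r0 where r0: "r0 > 0" "ball x0 r0 \<subseteq> U0" using U0(1) x0(1) open_contains_ball by blast
    define H where "H = ball x0 (r0/2) \<inter> F"
    have x0H: "x0 \<in> H" unfolding H_def using x0 r0 by simp
    have nxt_ex: "\<exists>q. q \<in> H \<and> dist p q < \<rho> \<and> \<psi> q \<notin> T" if nx: "p \<in> H" "\<rho> > 0" "finite T" for p \<rho> T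
    proof -
      define V where "V = ball x0 (r0/2) \<inter> ball p \<rho>"
      have oV: "open V" unfolding V_def by (intro open_Int open_ball)
      have pV: "p \<in> V \<inter> F" using nx unfolding V_def H_def by simp
      then have neV: "V \<inter> F \<noteq> {}" by blast
      have VU: "V \<subseteq> U0" using r0 unfolding V_def by auto
      from avoid[OF nx(3) oV neV VU]
      obtain V' where V'0: "open V' \<and> V' \<subseteq> V \<and> V' \<inter> F \<noteq> {} \<and> (\<forall>q\<in>V' \<inter> F. \<psi> q \<notin> T)" ..
      then have V': "open V'" "V' \<subseteq> V" "V' \<inter> F \<noteq> {}" "\<forall>q\<in>V' \<inter> F. \<psi> q \<notin> T" by blast+
      then obtain q where "q \<in> V' \<inter> F" by blast
      then show ?thesis using V' unfolding V_def H_def by (intro exI[of _ q]) auto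
    qed
    define idx where "idx xs = prod_decode ((length xs - 1) div 2)" for xs :: "'a list"
    define nxt where "nxt xs = (SOME q. q \<in> H \<and> dist (xs ! fst (idx xs)) q < 1 / real (Suc (snd (idx xs)))
        \<and> \<psi> q \<notin> \<psi> ` set xs)" for xs
    have nxt_spec: "nxt xs \<in> H \<and> dist (xs ! fst (idx xs)) (nxt xs) < 1 / real (Suc (snd (idx xs)))
        \<and> \<psi> (nxt xs) \<notin> \<psi> ` set xs" if "set xs \<subseteq> H" "xs \<noteq> []" for xs
    proof -
      have "fst (idx xs) \<le> (length xs - 1) div 2" unfolding idx_def by (rule fst_decode_le)
      then have "fst (idx xs) < length xs" using that(2) by (cases xs) auto
      then have "xs ! fst (idx xs) \<in> H" using that(1) nth_mem by blast
      then have "\<exists>q. q \<in> H \<and> dist (xs ! fst (idx xs)) q < 1 / real (Suc (snd (idx xs))) \<and> \<psi> q \<notin> \<psi> ` set xs"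
        using nxt_ex by simp
      then show ?thesis unfolding nxt_def by (rule someI_ex)
    qed
    define L where "L = rec_nat [x0] (\<lambda>n xs. xs @ [nxt xs])"
    have L0: "L 0 = [x0]" and LS: "L (Suc n) = L n @ [nxt (L n)]" for n unfolding L_def by simp_all
    have len: "length (L n) = Suc n" for n by (induction n) (simp_all add: L0 LS)
    have LH: "set (L n) \<subseteq> H" for n
    proof (induction n)
      case 0 then show ?case using x0H L0 by simp
    next
      case (Suc n)
      have "L n \<noteq> []" using len[of n] by auto
      then show ?case using nxt_spec[OF Suc] Suc LS by simp
    qed
    define x where "x n = L n ! n" for n
    have pre: "L n ! i = x i" if "i \<le> n" for i n
      using that
    proof (induction n)
      case 0 then show ?case unfolding x_def by simp
    next
      case (Suc n)
      show ?case
      proof (cases "i = Suc n")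
        case True then show ?thesis unfolding x_def by simp
      next
        case False
        then have "i < length (L n)" using Suc.prems len[of n] by simp
        then have "L (Suc n) ! i = L n ! i" unfolding LS by (simp add: nth_append)
        then show ?thesis using Suc False by simp
      qed
    qed
    have xS: "x (Suc n) = nxt (L n)" for n
      unfolding x_def LS using len[of n] by (simp add: nth_append)
    have setL: "set (L n) = x ` {..n}" for n
    proof
      show "set (L n) \<subseteq> x ` {..n}"
      proof
        fix y assume "y \<in> set (L n)"
        then obtain i where "i < length (L n)" "L n ! i = y" by (auto simp: in_set_conv_nth)
        then show "y \<in> x ` {..n}" using pre len by (metis atMost_iff image_eqI less_Suc_eq_le)
      qed
      show "x ` {..n} \<subseteq> set (L n)"
      proof
        fix y assume "y \<in> x ` {..n}"
        then obtain i where "i \<le> n" "y = x i" by blast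
        then show "y \<in> set (L n)" using pre len by (metis le_imp_less_Suc nth_mem)
      qed
    qed
    have xH: "x n \<in> H" for n using LH[of n] setL by blast
    have ne: "L n \<noteq> []" for n using len[of n] by auto
    have idxL: "idx (L n) = prod_decode (n div 2)" for n unfolding idx_def len by simp
    have xclose: "dist (x (fst (prod_decode (n div 2)))) (x (Suc n)) < 1 / real (Suc (snd (prod_decode (n div 2))))" for n
    proof -
      have "fst (prod_decode (n div 2)) \<le> n" using fst_decode_le[of "n div 2"] by simp
      then have "L n ! fst (prod_decode (n div 2)) = x (fst (prod_decode (n div 2)))" by (rule pre)
      then show ?thesis using nxt_spec[OF LH ne, of n] xS idxL by simp
    qed
    have xdist: "\<psi> (x m) \<noteq> \<psi> (x i)" if im: "i < m" for i m
    proof -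
      obtain n where n: "m = Suc n" using im by (cases m) auto
      have "x i \<in> set (L n)" using setL im n by auto
      then show ?thesis using nxt_spec[OF LH ne, of n] xS n by auto
    qed
    have xinj: "\<psi> (x m) = \<psi> (x i) \<Longrightarrow> m = i" for m i
      using xdist[of i m] xdist[of m i] by (metis linorder_neqE_nat)
    define S where "S = \<psi> ` x ` {m. odd m}"
    define K where "K = closure (range x)"
    have "H \<subseteq> cball x0 (r0/2) \<inter> F" unfolding H_def using ball_subset_cball by blast
    moreover have "range x \<subseteq> H" using xH by blast
    ultimately have "range x \<subseteq> cball x0 (r0/2) \<inter> F" by (rule order.trans[rotated])
    moreover have "closed (cball x0 (r0/2) \<inter> F)" using Fc by (intro closed_Int closed_cball)
    ultimately have Ksub: "K \<subseteq> cball x0 (r0/2) \<inter> F" unfolding K_def by (rule closure_minimal)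
    have "cball x0 (r0/2) \<subseteq> ball x0 r0"
    proof
      fix z assume "z \<in> cball x0 (r0/2)"
      then have "dist x0 z \<le> r0/2" by simp
      then show "z \<in> ball x0 r0" using r0(1) by simp
    qed
    then have KU: "K \<subseteq> U0 \<inter> F" using Ksub r0 by blast
    obtain \<C>1 where C1: "countable \<C>1" "\<forall>C\<in>\<C>1. closed C" "f -` (\<Union>a\<in>S. Oz a) = \<Union>\<C>1"
      by (rule borel1_piecesE[OF B1, of "\<Union>a\<in>S. Oz a"]) (unfold Oz_def, intro open_UN ballI O_open)
    obtain \<C>2 where C2: "countable \<C>2" "\<forall>C\<in>\<C>2. closed C" "f -` (\<Union>a\<in>-S. Oz a) = \<Union>\<C>2"
      by (rule borel1_piecesE[OF B1, of "\<Union>a\<in>-S. Oz a"]) (unfold Oz_def, intro open_UN ballI O_open)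
    have covK: "UNIV \<inter> K \<subseteq> \<Union>(\<C>1 \<union> \<C>2)"
    proof
      fix z assume "z \<in> UNIV \<inter> K"
      then have zU: "z \<in> U0 \<inter> F" using KU by blast
      show "z \<in> \<Union>(\<C>1 \<union> \<C>2)"
      proof (cases "\<psi> z \<in> S")
        case True
        then have "z \<in> f -` (\<Union>a\<in>S. Oz a)" using psi[OF zU] by blast
        then show ?thesis using C1(3) by blast
      next
        case False
        then have "z \<in> f -` (\<Union>a\<in>-S. Oz a)" using psi[OF zU] by blast
        then show ?thesis using C2(3) by blast
      qed
    qed
    have Kc: "closed K" unfolding K_def by simp
    have "x 0 = x0" unfolding x_def L0 by simp
    then have "x0 \<in> range x" by (metis rangeI)
    then have x0K: "x0 \<in> K" unfolding K_def using closure_subset[of "range x"] by blast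
    have "\<exists>C\<in>\<C>1 \<union> \<C>2. \<exists>U. open U \<and> U \<inter> K \<noteq> {} \<and> U \<inter> K \<subseteq> C \<inter> UNIV"
      by (rule baire_piece[OF hB Kc _ _ _ _ covK]) (use C1 C2 x0K in auto)
    then obtain C U where CU: "C \<in> \<C>1 \<union> \<C>2" "open U" "U \<inter> K \<noteq> {}" "U \<inter> K \<subseteq> C" by blast
    have "U \<inter> range x \<noteq> {}" using CU(3) open_Int_closure_eq_empty[OF CU(2)] unfolding K_def by blast
    then obtain k where k: "x k \<in> U" by blast
    obtain t where t: "t > 0" "ball (x k) t \<subseteq> U" using CU(2) k open_contains_ball by blast
    obtain j where j: "1 / real (Suc j) < t" using arch_suc[OF t(1)] by blast
    define n where "n = prod_encode (k, j)"
    have d1: "(2 * n) div 2 = n" "(Suc (2 * n)) div 2 = n" by simp_all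
    have "dist (x k) (x (Suc (2 * n))) < 1 / real (Suc j)"
      using xclose[of "2 * n"] d1 unfolding n_def by simp
    then have p1U: "x (Suc (2 * n)) \<in> U" using t j by auto
    have "dist (x k) (x (Suc (Suc (2 * n)))) < 1 / real (Suc j)"
      using xclose[of "Suc (2 * n)"] d1 unfolding n_def by simp
    then have p0U: "x (Suc (Suc (2 * n))) \<in> U" using t j by auto
    have inK: "x i \<in> K" for i
    proof -
      have "x i \<in> range x" by (rule rangeI)
      then show ?thesis unfolding K_def using closure_subset[of "range x"] by (rule subsetD[rotated])
    qed
    have p1C: "x (Suc (2 * n)) \<in> C" using p1U inK CU(4) by blast
    have p0C: "x (Suc (Suc (2 * n))) \<in> C" using p0U inK CU(4) by blast
    show False
    proof (cases "C \<in> \<C>1")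
      case True
      then have "f (x (Suc (Suc (2 * n)))) \<in> (\<Union>a\<in>S. Oz a)" using p0C C1(3) by blast
      then obtain m where m: "odd m" "f (x (Suc (Suc (2 * n)))) \<in> Oz (\<psi> (x m))" unfolding S_def by blast
      have "x (Suc (Suc (2 * n))) \<in> U0 \<inter> F" using KU inK by blast
      then have "\<psi> (x (Suc (Suc (2 * n)))) = \<psi> (x m)" using psi_u m(2) by blast
      then have eqm: "Suc (Suc (2 * n)) = m" by (rule xinj)
      show False using m(1) unfolding eqm[symmetric] by simp
    next
      case False
      then have "C \<in> \<C>2" using CU(1) by blast
      then have "f (x (Suc (2 * n))) \<in> (\<Union>a\<in>-S. Oz a)" using p1C C2(3) by blast
      then obtain a where a: "a \<notin> S" "f (x (Suc (2 * n))) \<in> Oz a" by blast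
      have "x (Suc (2 * n)) \<in> U0 \<inter> F" using KU inK by blast
      then have "\<psi> (x (Suc (2 * n))) = a" using psi_u a(2) by blast
      moreover have "\<psi> (x (Suc (2 * n))) \<in> S" unfolding S_def by simp
      ultimately show False using a(1) by simp
    qed
  qed
qed


theorem theorem2p4:
  fixes f :: "'a::metric_space \<Rightarrow> 'b::metric_space"
  shows "(weakly_separated f \<longleftrightarrow> LTZ f)
    \<and> (weakly_separated f \<longrightarrow> generalized_Lebesgue_property f)
    \<and> (fragmentable f \<longrightarrow> Borel1 f)
    \<and> (hereditarily_Baire (euclidean :: 'a topology) \<and> Borel1 f \<longrightarrow> PCP f)
    \<and> (hereditarily_Baire (euclidean :: 'a topology) \<and> weakly_separated f \<longrightarrow> fragmentable f)
    \<and> (separable_space (euclidean :: 'a topology) \<and> generalized_Lebesgue_property f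
         \<longrightarrow> Lebesgue_property f)"
proof (intro conjI impI)
  show "weakly_separated f \<longleftrightarrow> LTZ f" using ws_ltz ltz_ws by blast
next
  assume "weakly_separated f"
  then show "generalized_Lebesgue_property f" by (intro ltz_glp ws_ltz)
next
  assume "fragmentable f"
  then show "Borel1 f" by (intro glp_borel1 ltz_glp ws_ltz frag_ws)
next
  assume a: "hereditarily_Baire (euclidean :: 'a topology) \<and> Borel1 f"
  then show "PCP f" using frag_pcp borel_frag by blast
next
  assume a: "hereditarily_Baire (euclidean :: 'a topology) \<and> weakly_separated f"
  then show "fragmentable f" using ws_hb_frag by blast
next
  assume a: "separable_space (euclidean :: 'a topology) \<and> generalized_Lebesgue_property f"
  then show "Lebesgue_property f" using glp_leb by blast
qed

end
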